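(* Let $n\ge1$ and $s\in D^n$. Then $\sum_{i=1}^{n}L_i\le\left\lfloor\frac{(n+1)^2}{4}\right\rfloor$.
   Context: Let $D$ be a commutative integral domain with $1\neq 0$. For $s=(s_1,\dots,s_n)\in D^n$, a polynomial $f\in D[x]$ annihilates $s$ if $f=0$, or $d=\deg f\ge0$ and $\sum_{k=0}^{d}f_ks_{j-d+k}=0$ for all $d+1\le j\le n$. The linear complexity $L(s)$ is the least degree of a nonzero annihilator of $s$, and $L_i=L(s_1,\dots,s_i)$. *)

theory Defs
  imports "HOL-Computational_Algebra.Polynomial"
begin

text \<open>A finite sequence s = (s_1,...,s_n) over an integral domain is modelled by a
function s :: nat => 'a, of which only the values s 1, ..., s n are relevant.\<close>

definition annihilates :: "'a::idom poly \<Rightarrow> (nat \<Rightarrow> 'a) \<Rightarrow> nat \<Rightarrow> bool" where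
  "annihilates f s n \<longleftrightarrow> f = 0 \<or>
     (\<forall>j. degree f + 1 \<le> j \<and> j \<le> n \<longrightarrow>
        (\<Sum>k = 0..degree f. coeff f k * s (j - degree f + k)) = 0)"

definition lin_compl :: "(nat \<Rightarrow> 'a::idom) \<Rightarrow> nat \<Rightarrow> nat" where
  "lin_compl s n = (LEAST d. \<exists>f. f \<noteq> 0 \<and> degree f = d \<and> annihilates f s n)"

end

theory Submission imports Defs begin

definition DS :: "(nat \<Rightarrow> 'a::idom) \<Rightarrow> (nat \<Rightarrow> 'a) \<Rightarrow> nat \<Rightarrow> nat \<Rightarrow> 'a" where
  "DS s u d j = (\<Sum>i=0..d. u i * s (j - i))"

definition ann :: "(nat \<Rightarrow> 'a::idom) \<Rightarrow> nat \<Rightarrow> nat \<Rightarrow> bool" where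
  "ann s d N \<longleftrightarrow> (\<exists>u. u 0 \<noteq> 0 \<and> (\<forall>i>d. u i = 0) \<and> (\<forall>j. d < j \<and> j \<le> N \<longrightarrow> DS s u d j = 0))"

lemma DS_ext:
  assumes "\<forall>i>d. u i = 0" "d \<le> e"
  shows "DS s u e j = DS s u d j"
  unfolding DS_def
  by (rule sum.mono_neutral_right) (use assms in auto)

lemma ann_iff: "(\<exists>f. f \<noteq> 0 \<and> degree f = d \<and> annihilates f s N) \<longleftrightarrow> ann s d N"
proof
  assume "\<exists>f. f \<noteq> 0 \<and> degree f = d \<and> annihilates f s N"
  then obtain f where f: "f \<noteq> 0" "degree f = d" "annihilates f s N" by blast
  define u where "u i = (if i \<le> d then coeff f (d - i) else 0)" for i
  have "u 0 \<noteq> 0" using f(1) unfolding u_def f(2)[symmetric] by simp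
  moreover have "\<forall>i>d. u i = 0" by (simp add: u_def)
  moreover have "DS s u d j = 0" if "d < j" "j \<le> N" for j
  proof -
    have "0 = (\<Sum>k = 0..d. coeff f k * s (j - d + k))"
      using f that unfolding annihilates_def by auto
    also have "\<dots> = (\<Sum>i = 0..d. coeff f (d - i) * s (j - d + (d - i)))"
      using sum.atLeastAtMost_rev[of "\<lambda>k. coeff f k * s (j - d + k)" 0 d] by simp
    also have "\<dots> = DS s u d j" unfolding DS_def u_def
      by (rule sum.cong) (use that in auto)
    finally show ?thesis by simp
  qed
  ultimately show "ann s d N" unfolding ann_def by blast
next
  assume "ann s d N"
  then obtain u where u: "u 0 \<noteq> 0" "\<forall>i>d. u i = 0" "\<forall>j. d < j \<and> j \<le> N \<longrightarrow> DS s u d j = 0"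
    unfolding ann_def by blast
  define f where "f = Poly (map (\<lambda>k. u (d - k)) [0..<Suc d])"
  have cf: "coeff f k = (if k \<le> d then u (d - k) else 0)" for k
    unfolding f_def by (auto simp: nth_default_def simp del: upt_Suc)
  have deg: "degree f = d"
    by (rule antisym) (auto intro!: degree_le le_degree simp: cf u(1))
  have f0: "f \<noteq> 0" using cf[of d] u(1) by auto
  have "annihilates f s N" unfolding annihilates_def deg
  proof (intro disjI2 allI impI)
    fix j assume j: "d + 1 \<le> j \<and> j \<le> N"
    have "(\<Sum>k = 0..d. coeff f k * s (j - d + k)) = (\<Sum>i = 0..d. coeff f (d - i) * s (j - d + (d - i)))"
      using sum.atLeastAtMost_rev[of "\<lambda>k. coeff f k * s (j - d + k)" 0 d] by simp
    also have "\<dots> = DS s u d j" unfolding DS_def cf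
      by (rule sum.cong) (use j in auto)
    also have "\<dots> = 0" using u(3) j by auto
    finally show "(\<Sum>k = 0..d. coeff f k * s (j - d + k)) = 0" .
  qed
  then show "\<exists>f. f \<noteq> 0 \<and> degree f = d \<and> annihilates f s N" using f0 deg by blast
qed

lemma lc_eq: "lin_compl s N = (LEAST d. ann s d N)"
  unfolding lin_compl_def ann_iff ..

lemma ann_self: "ann s N N"
  unfolding ann_def by (rule exI[of _ "\<lambda>i. if i = 0 then 1 else 0"]) auto

lemma ann_lc: "ann s (lin_compl s N) N"
  unfolding lc_eq by (rule LeastI[OF ann_self])

lemma lc_le: "ann s d N \<Longrightarrow> lin_compl s N \<le> d"
  unfolding lc_eq by (rule Least_le)

lemma lc_le_N: "lin_compl s N \<le> N" by (rule lc_le[OF ann_self])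

lemma ann_mono: "ann s d (Suc N) \<Longrightarrow> ann s d N"
  unfolding ann_def by auto

lemma lc_mono: "lin_compl s N \<le> lin_compl s (Suc N)"
  by (rule lc_le[OF ann_mono[OF ann_lc]])

lemma construct:
  fixes s :: "nat \<Rightarrow> 'a::idom"
  assumes uf: "uf 0 \<noteq> 0" "\<forall>i>m. uf i = 0" "\<forall>j. m < j \<and> j \<le> n \<longrightarrow> DS s uf m j = 0"
    and ug: "ug 0 \<noteq> 0" "\<forall>i>a. ug i = 0" "\<forall>j. a < j \<and> j \<le> k \<longrightarrow> DS s ug a j = 0"
    and eps: "DS s ug a (Suc k) \<noteq> 0"
    and mk: "m + a \<le> Suc k" and kn: "k < n"
  shows "ann s (max m (Suc n - m)) (Suc n)"
proof -
  define E where "E = max m (Suc n - m)"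
  define r where "r = n - k"
  define \<delta> where "\<delta> = DS s uf m (Suc n)"
  define \<epsilon> where "\<epsilon> = DS s ug a (Suc k)"
  define g where "g i = (if r \<le> i then ug (i - r) else 0)" for i
  define h where "h i = \<epsilon> * uf i - \<delta> * g i" for i
  have r1: "r \<ge> 1" using kn by (simp add: r_def)
  have Era: "r + a \<le> E" using mk kn by (simp add: E_def r_def)
  have mE: "m \<le> E" by (simp add: E_def)
  have h0: "h 0 \<noteq> 0" using r1 uf(1) eps by (simp add: h_def g_def \<epsilon>_def)
  have hz: "\<forall>i>E. h i = 0"
    proof (intro allI impI)
      fix i assume i: "E < i"
      have "uf i = 0" using uf(2) i mE by simp
      moreover have "g i = 0"
      proof (cases "r \<le> i")
        case True
        then have "a < i - r" using i Era by linarith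
        then show ?thesis using ug(2) True by (simp add: g_def)
      qed (simp add: g_def)
      ultimately show "h i = 0" by (simp add: h_def)
    qed
  have gsum: "DS s g E j = DS s ug a (j - r)" for j
  proof -
    have "DS s g E j = (\<Sum>i=r..E. ug (i - r) * s (j - i))"
      unfolding DS_def g_def
      by (rule sum.mono_neutral_cong_right) (simp_all, force)
    also have "\<dots> = (\<Sum>i=0..E - r. ug i * s (j - r - i))"
      using sum.shift_bounds_cl_nat_ivl[of "\<lambda>i. ug (i - r) * s (j - i)" 0 r "E - r"] Era
      by (simp add: add.commute diff_diff_eq)
    also have "\<dots> = DS s ug (E - r) (j - r)" by (simp add: DS_def)
    also have "\<dots> = DS s ug a (j - r)" by (rule DS_ext[OF ug(2)]) (use Era in linarith)
    finally show ?thesis .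
  qed
  have hsum: "DS s h E j = \<epsilon> * DS s uf m j - \<delta> * DS s ug a (j - r)" for j
  proof -
    have "DS s h E j = \<epsilon> * DS s uf E j - \<delta> * DS s g E j"
    proof -
      have "DS s h E j = (\<Sum>i=0..E. \<epsilon> * (uf i * s (j - i)) - \<delta> * (g i * s (j - i)))"
        unfolding DS_def h_def by (rule sum.cong) (simp_all add: left_diff_distrib)
      also have "\<dots> = \<epsilon> * DS s uf E j - \<delta> * DS s g E j"
        unfolding DS_def sum_subtractf sum_distrib_left ..
      finally show ?thesis .
    qed
    then show ?thesis using gsum DS_ext[OF uf(2) mE] by simp
  qed
  have "DS s h E j = 0" if j: "E < j" "j \<le> Suc n" for j
  proof (cases "j = Suc n")
    case True
    have "Suc n - r = Suc k" using kn by (simp add: r_def)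
    then show ?thesis using True hsum by (simp add: \<delta>_def \<epsilon>_def)
  next
    case False
    then have "j \<le> n" using j by simp
    have "m < j" using j mE by linarith
    then have 1: "DS s uf m j = 0" using uf(3) \<open>j \<le> n\<close> by blast
    have "a < j - r" "j - r \<le> k" using j Era kn \<open>j \<le> n\<close> unfolding r_def by linarith+
    then have 2: "DS s ug a (j - r) = 0" using ug(3) by blast
    note 1 2
    then show ?thesis using hsum by simp
  qed
  then show ?thesis unfolding ann_def E_def[symmetric] using h0 hz by blast
qed


lemma crossing: "(f::nat\<Rightarrow>nat) 0 < m \<Longrightarrow> m \<le> f n \<Longrightarrow> \<exists>k<n. f k < m \<and> m \<le> f (Suc k)"
proof (induction n)
  case 0 then show ?case by simp
next
  case (Suc n)
  show ?case
  proof (cases "m \<le> f n")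
    case True then show ?thesis using Suc by (meson less_SucI)
  next
    case False then show ?thesis using Suc by auto
  qed
qed

lemma lc_mono_le: "i \<le> j \<Longrightarrow> lin_compl s i \<le> lin_compl s j"
  by (rule lift_Suc_mono_le[of "lin_compl s"]) (rule lc_mono)

lemma jump: "lin_compl s (Suc n) \<le> max (lin_compl s n) (Suc n - lin_compl s n)"
proof (induction n rule: less_induct)
  case (less n)
  define m where "m = lin_compl s n"
  show ?case
  proof (cases "m = 0")
    case True then show ?thesis using lc_le_N[of s "Suc n"] by (simp add: m_def)
  next
    case False
    have "lin_compl s 0 = 0" using lc_le_N[of s 0] by simp
    then obtain k where k: "k < n" "lin_compl s k < m" "m \<le> lin_compl s (Suc k)"
      using crossing[of "lin_compl s" m n] False by (auto simp: m_def)
    have "lin_compl s (Suc k) \<le> m" unfolding m_def by (rule lc_mono_le) (use k in simp)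
    with k have LSk: "lin_compl s (Suc k) = m" by simp
    define a where "a = lin_compl s k"
    have "m \<le> max a (Suc k - a)" using less.IH[OF k(1)] LSk by (simp add: a_def)
    then have ma: "m + a \<le> Suc k" using k(2) unfolding a_def[symmetric] by linarith
    obtain uf where uf: "uf 0 \<noteq> 0" "\<forall>i>m. uf i = 0" "\<forall>j. m < j \<and> j \<le> n \<longrightarrow> DS s uf m j = 0"
      using ann_lc[of s n] unfolding ann_def m_def by blast
    obtain ug where ug: "ug 0 \<noteq> 0" "\<forall>i>a. ug i = 0" "\<forall>j. a < j \<and> j \<le> k \<longrightarrow> DS s ug a j = 0"
      using ann_lc[of s k] unfolding ann_def a_def by blast
    have eps: "DS s ug a (Suc k) \<noteq> 0"
    proof
      assume "DS s ug a (Suc k) = 0"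
      then have "ann s a (Suc k)" unfolding ann_def using ug le_Suc_eq by blast
      then have "lin_compl s (Suc k) \<le> a" by (rule lc_le)
      then show False using LSk k(2) a_def by simp
    qed
    have "ann s (max m (Suc n - m)) (Suc n)"
      by (rule construct[OF uf ug eps ma k(1)])
    then show ?thesis using lc_le m_def by blast
  qed
qed

lemma arith2: "(m::nat) < M \<Longrightarrow> M + m \<le> c \<Longrightarrow> m*(c-m) \<le> M*(c-M)"
proof -
  assume a: "m < M" "M + m \<le> c"
  then obtain d e where "M = m + d" "c = M + m + e" by (metis le_add_diff_inverse less_imp_add_positive)
  then show ?thesis by (simp add: algebra_simps)
qed

lemma invariant: "(\<Sum>i = 1..n. lin_compl s i) \<le> lin_compl s n * (Suc n - lin_compl s n)"
proof (induction n)
  case 0 then show ?case by simp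
next
  case (Suc n)
  define m where "m = lin_compl s n"
  define M where "M = lin_compl s (Suc n)"
  have mn: "m \<le> n" using lc_le_N m_def by blast
  have mM: "m \<le> M" using lc_mono M_def m_def by blast
  have J: "M \<le> max m (Suc n - m)" using jump M_def m_def by blast
  have "(\<Sum>i = 1..Suc n. lin_compl s i) = (\<Sum>i = 1..n. lin_compl s i) + M"
    by (simp add: M_def)
  also have "\<dots> \<le> m * (Suc n - m) + M" using Suc m_def by simp
  also have "\<dots> \<le> M * (Suc (Suc n) - M)"
  proof (cases "M = m")
    case True
    then show ?thesis using mn by (simp add: Suc_diff_le algebra_simps)
  next
    case False
    then have "m < M" "M + m \<le> Suc n" using mM J by auto
    then have "m * (Suc n - m) \<le> M * (Suc n - M)" by (rule arith2)
    moreover have "Suc (Suc n) - M = Suc (Suc n - M)" using \<open>M + m \<le> Suc n\<close> by simp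
    ultimately show ?thesis by simp
  qed
  finally show ?case by (simp add: M_def)
qed

lemma amgm: "(m::nat) \<le> c \<Longrightarrow> 4 * (m * (c - m)) \<le> c^2"
proof -
  assume "m \<le> c"
  then obtain t where t: "c = m + t" using le_Suc_ex by blast
  have "4 * (m * t) \<le> (m + t)^2"
  proof (cases "m \<le> t")
    case True
    then obtain d where "t = m + d" using le_Suc_ex by blast
    then show ?thesis by (simp add: power2_eq_square algebra_simps)
  next
    case False
    then obtain d where "m = t + d" by (metis le_Suc_ex nat_le_linear)
    then show ?thesis by (simp add: power2_eq_square algebra_simps)
  qed
  then show ?thesis using t by simp
qed

theorem mainTheorem12:
  fixes s :: "nat \<Rightarrow> 'a::idom" and n :: nat
  assumes "n \<ge> 1"
  shows "(\<Sum>i = 1..n. lin_compl s i) \<le> (n + 1)^2 div 4"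
proof -
  have m: "lin_compl s n \<le> n + 1" using lc_le_N[of s n] by simp
  have "4 * (lin_compl s n * (n + 1 - lin_compl s n)) \<le> (n+1)^2" by (rule amgm[OF m])
  then have "lin_compl s n * (n + 1 - lin_compl s n) \<le> (n + 1)^2 div 4"
    by (simp add: less_eq_div_iff_mult_less_eq mult.commute)
  then show ?thesis using invariant[of s n] by simp
qed

end
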